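(* Let $\Delta$ be a local derivation of $\mathcal{S}$ with $\Delta(G_0)=\Delta(G_1)=0$. Then $\Delta(G_m)=0$ for all $m\in\mathbb{Z}$.
   Context: $\mathcal{S}$ is the centerless super Virasoro algebra: the Lie superalgebra over $\mathbb{C}$ with basis $\{L_m,G_n: m,n\in\mathbb{Z}\}$, $L_m$ even, $G_n$ odd, and brackets $[L_m,L_n]=(m-n)L_{m+n}$, $[L_m,G_r]=(\frac m2-r)G_{m+r}$, $[G_r,G_s]=2L_{r+s}$. A homogeneous linear map $D$ of parity $|D|$ is a derivation if $D([x,y])=[D(x),y]+(-1)^{|D||x|}[x,D(y)]$ for homogeneous $x,y$; derivations are sums of even and odd ones. A linear map $\Delta:\mathcal{S}\to\mathcal{S}$ is a local derivation if for every $x$ there is a derivation $D_x$ with $\Delta(x)=D_x(x)$. *)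

theory Defs
  imports Complex_Main "HOL-Library.Poly_Mapping" "HOL-Library.Product_Plus"
begin

text \<open>The centerless super Virasoro algebra S.  An element is a pair (a, b) of finitely
  supported coefficient functions: a is the coefficient vector w.r.t. the even basis
  vectors L_m, b the one w.r.t. the odd basis vectors G_n.\<close>

type_synonym sv = "(int \<Rightarrow>\<^sub>0 complex) \<times> (int \<Rightarrow>\<^sub>0 complex)"

definition Lb :: "int \<Rightarrow> sv" where "Lb m = (Poly_Mapping.single m 1, 0)"
definition Gb :: "int \<Rightarrow> sv" where "Gb n = (0, Poly_Mapping.single n 1)"

definition sv_scale :: "complex \<Rightarrow> sv \<Rightarrow> sv" where
  "sv_scale c x = (Poly_Mapping.map ((*) c) (fst x), Poly_Mapping.map ((*) c) (snd x))"

text \<open>The bracket, extended bilinearly from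
  [L_m,L_n] = (m-n)L_{m+n}, [L_m,G_r] = (m/2-r)G_{m+r}, [G_r,L_m] = -(m/2-r)G_{m+r},
  [G_r,G_s] = 2 L_{r+s}.\<close>
definition sv_bracket :: "sv \<Rightarrow> sv \<Rightarrow> sv" where
  "sv_bracket x y =
    ((\<Sum>m\<in>Poly_Mapping.keys (fst x). \<Sum>n\<in>Poly_Mapping.keys (fst y).
        Poly_Mapping.single (m + n) (Poly_Mapping.lookup (fst x) m * Poly_Mapping.lookup (fst y) n * of_int (m - n)))
     + (\<Sum>r\<in>Poly_Mapping.keys (snd x). \<Sum>s\<in>Poly_Mapping.keys (snd y).
        Poly_Mapping.single (r + s) (2 * Poly_Mapping.lookup (snd x) r * Poly_Mapping.lookup (snd y) s)),
     (\<Sum>m\<in>Poly_Mapping.keys (fst x). \<Sum>r\<in>Poly_Mapping.keys (snd y).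
        Poly_Mapping.single (m + r) (Poly_Mapping.lookup (fst x) m * Poly_Mapping.lookup (snd y) r * (of_int m / 2 - of_int r)))
     - (\<Sum>r\<in>Poly_Mapping.keys (snd x). \<Sum>m\<in>Poly_Mapping.keys (fst y).
        Poly_Mapping.single (m + r) (Poly_Mapping.lookup (snd x) r * Poly_Mapping.lookup (fst y) m * (of_int m / 2 - of_int r))))"

definition sv_linear :: "(sv \<Rightarrow> sv) \<Rightarrow> bool" where
  "sv_linear D \<longleftrightarrow> (\<forall>x y. D (x + y) = D x + D y) \<and> (\<forall>c x. D (sv_scale c x) = sv_scale c (D x))"

definition sv_even :: "sv \<Rightarrow> bool" where "sv_even x \<longleftrightarrow> snd x = 0"
definition sv_odd :: "sv \<Rightarrow> bool" where "sv_odd x \<longleftrightarrow> fst x = 0"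

text \<open>parity of a homogeneous map / element: False = even, True = odd\<close>
definition sv_hom_of_parity :: "bool \<Rightarrow> sv \<Rightarrow> bool" where
  "sv_hom_of_parity p x \<longleftrightarrow> (if p then sv_odd x else sv_even x)"

definition sv_map_of_parity :: "bool \<Rightarrow> (sv \<Rightarrow> sv) \<Rightarrow> bool" where
  "sv_map_of_parity p D \<longleftrightarrow>
     (\<forall>x. sv_even x \<longrightarrow> sv_hom_of_parity p (D x)) \<and>
     (\<forall>x. sv_odd x \<longrightarrow> sv_hom_of_parity (\<not> p) (D x))"

definition sv_hom_derivation :: "bool \<Rightarrow> (sv \<Rightarrow> sv) \<Rightarrow> bool" where
  "sv_hom_derivation p D \<longleftrightarrow> sv_linear D \<and> sv_map_of_parity p D \<and>
     (\<forall>x y. (sv_even x \<or> sv_odd x) \<longrightarrow> (sv_even y \<or> sv_odd y) \<longrightarrow>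
        D (sv_bracket x y) =
          sv_bracket (D x) y
          + sv_scale (if p \<and> sv_odd x then -1 else 1) (sv_bracket x (D y)))"

definition sv_derivation :: "(sv \<Rightarrow> sv) \<Rightarrow> bool" where
  "sv_derivation D \<longleftrightarrow> (\<exists>D0 D1. sv_hom_derivation False D0 \<and> sv_hom_derivation True D1 \<and>
                                 (\<forall>x. D x = D0 x + D1 x))"

definition sv_local_derivation :: "(sv \<Rightarrow> sv) \<Rightarrow> bool" where
  "sv_local_derivation \<Delta> \<longleftrightarrow> sv_linear \<Delta> \<and> (\<forall>x. \<exists>D. sv_derivation D \<and> \<Delta> x = D x)"

end

theory Submission
  imports Defs "HOL-Computational_Algebra.Polynomial"
begin

lemma lookup_map_mult: fixes c :: complex shows "Poly_Mapping.lookup (Poly_Mapping.map ((*) c) p) k = c * Poly_Mapping.lookup p k"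
  by (simp add: Poly_Mapping.map.rep_eq when_def)

lemma fst_scale: "Poly_Mapping.lookup (fst (sv_scale c x)) k = c * Poly_Mapping.lookup (fst x) k"
  by (simp add: sv_scale_def lookup_map_mult)
lemma snd_scale: "Poly_Mapping.lookup (snd (sv_scale c x)) k = c * Poly_Mapping.lookup (snd x) k"
  by (simp add: sv_scale_def lookup_map_mult)

lemma lk_sum1:
  fixes f :: "int \<Rightarrow> complex" and r k :: int
  assumes "finite K" "\<And>x. x \<notin> K \<Longrightarrow> f x = 0"
  shows "Poly_Mapping.lookup (\<Sum>x\<in>K. Poly_Mapping.single (x + r) (f x)) k = f (k - r)"
proof -
  have "Poly_Mapping.lookup (\<Sum>x\<in>K. Poly_Mapping.single (x + r) (f x)) k
     = (\<Sum>x\<in>K. if x = k - r then f x else 0)"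
    by (simp add: lookup_sum lookup_single when_def) (rule sum.cong, auto)
  also have "\<dots> = f (k - r)" using assms by (simp add: sum.delta')
  finally show ?thesis .
qed

lemma lk_sum2:
  fixes f :: "int \<Rightarrow> complex" and r k :: int
  assumes "finite K" "\<And>x. x \<notin> K \<Longrightarrow> f x = 0"
  shows "Poly_Mapping.lookup (\<Sum>x\<in>K. Poly_Mapping.single (r + x) (f x)) k = f (k - r)"
  using lk_sum1[OF assms, where r=r and k=k] by (simp add: add.commute)

lemma nk: "x \<notin> Poly_Mapping.keys p \<Longrightarrow> Poly_Mapping.lookup p x = 0"
  by (simp add: in_keys_iff)

lemma fst_Gb[simp]: "fst (Gb r) = 0" and snd_Gb[simp]: "snd (Gb r) = Poly_Mapping.single r 1"
  and fst_Lb[simp]: "fst (Lb r) = Poly_Mapping.single r 1" and snd_Lb[simp]: "snd (Lb r) = 0"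
  by (simp_all add: Gb_def Lb_def)

lemma L1: "Poly_Mapping.lookup (fst (sv_bracket a (Gb r))) k = 2 * Poly_Mapping.lookup (snd a) (k - r)"
  by (simp add: sv_bracket_def lk_sum1 nk)
lemma L2: "Poly_Mapping.lookup (snd (sv_bracket a (Gb r))) k
   = Poly_Mapping.lookup (fst a) (k - r) * (of_int (k - r) / 2 - of_int r)"
  by (simp add: sv_bracket_def lk_sum1 nk)
lemma L3: "Poly_Mapping.lookup (fst (sv_bracket (Lb n) b)) k
   = Poly_Mapping.lookup (fst b) (k - n) * of_int (n - (k - n))"
  by (simp add: sv_bracket_def lk_sum2 nk)
lemma L4: "Poly_Mapping.lookup (snd (sv_bracket (Lb n) b)) k
   = Poly_Mapping.lookup (snd b) (k - n) * (of_int n / 2 - of_int (k - n))"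
  by (simp add: sv_bracket_def lk_sum2 nk)
lemma L5: "Poly_Mapping.lookup (fst (sv_bracket (Gb r) b)) k = 2 * Poly_Mapping.lookup (snd b) (k - r)"
  by (simp add: sv_bracket_def lk_sum2 nk)
lemma L6: "Poly_Mapping.lookup (snd (sv_bracket (Gb r) b)) k
   = - (Poly_Mapping.lookup (fst b) (k - r) * (of_int (k - r) / 2 - of_int r))"
  by (simp add: sv_bracket_def lk_sum1 nk)
lemma L7: "Poly_Mapping.lookup (fst (sv_bracket a (Lb n))) k
   = Poly_Mapping.lookup (fst a) (k - n) * of_int ((k - n) - n)"
  by (simp add: sv_bracket_def lk_sum1 nk)

lemma B1: "sv_bracket (Gb r) (Gb s) = sv_scale 2 (Lb (r + s))"
  by (rule prod_eqI; rule poly_mapping_eqI)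
     (auto simp: L1 L2 fst_scale snd_scale lookup_single when_def)
lemma B2: "sv_bracket (Lb m) (Gb r) = sv_scale (of_int m / 2 - of_int r) (Gb (m + r))"
  by (rule prod_eqI; rule poly_mapping_eqI)
     (auto simp: L1 L2 fst_scale snd_scale lookup_single when_def)
lemma B3: "sv_bracket (Lb m) (Lb n) = sv_scale (of_int (m - n)) (Lb (m + n))"
  by (rule prod_eqI; rule poly_mapping_eqI)
     (auto simp: L3 L4 fst_scale snd_scale lookup_single when_def)

lemma scale1[simp]: "sv_scale 1 x = x"
  by (rule prod_eqI; rule poly_mapping_eqI) (simp_all add: fst_scale snd_scale)

lemma even_Lb: "sv_even (Lb n)" by (simp add: sv_even_def)
lemma odd_Gb: "sv_odd (Gb n)" by (simp add: sv_odd_def)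
lemma not_odd_Lb: "\<not> sv_odd (Lb n)" by (simp add: sv_odd_def poly_mapping_eq_iff fun_eq_iff lookup_single)

lemma int_induct_both:
  fixes P :: "int \<Rightarrow> bool"
  assumes "\<And>n::nat. P (int n)" "\<And>n::nat. P (- int n)"
  shows "P r"
  by (metis assms int_cases)

lemma even_der:
  assumes D: "sv_hom_derivation False D"
  shows "\<exists>Y. finite {j. Y j \<noteq> 0} \<and>
     (\<forall>r k. Poly_Mapping.lookup (snd (D (Gb r))) k = Y (k - r) * (of_int (k - r) / 2 - of_int r)) \<and>
     (\<forall>r. fst (D (Gb r)) = 0)"
proof -
  have lin: "\<And>c x. D (sv_scale c x) = sv_scale c (D x)"
    using D unfolding sv_hom_derivation_def sv_linear_def by blast
  have leib: "\<And>x y. (sv_even x \<or> sv_odd x) \<Longrightarrow> (sv_even y \<or> sv_odd y) \<Longrightarrow>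
        D (sv_bracket x y) = sv_bracket (D x) y + sv_bracket x (D y)"
  proof -
    fix x y assume hx: "sv_even x \<or> sv_odd x" and hy: "sv_even y \<or> sv_odd y"
    have "D (sv_bracket x y) = sv_bracket (D x) y
       + sv_scale (if False \<and> sv_odd x then -1 else 1) (sv_bracket x (D y))"
      using D hx hy unfolding sv_hom_derivation_def by blast
    then show "D (sv_bracket x y) = sv_bracket (D x) y + sv_bracket x (D y)" by simp
  qed
  have par: "\<And>r. fst (D (Gb r)) = 0"
  proof -
    fix r
    have "sv_map_of_parity False D" using D unfolding sv_hom_derivation_def by blast
    then have "sv_hom_of_parity (\<not> False) (D (Gb r))" using odd_Gb unfolding sv_map_of_parity_def by blast
    then show "fst (D (Gb r)) = 0" by (simp add: sv_hom_of_parity_def sv_odd_def)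
  qed
  define h1 where "h1 = fst (D (Lb 0))"
  define g where "g r = snd (D (Gb r))" for r
  define \<beta> where "\<beta> r = Poly_Mapping.lookup (g r) r" for r
  define \<alpha> where "\<alpha> n = Poly_Mapping.lookup (fst (D (Lb n))) n" for n
  have E1: "of_int (k - r) * Poly_Mapping.lookup (g r) k
         = Poly_Mapping.lookup h1 (k - r) * (of_int (k - r) / 2 - of_int r)" for r k
  proof -
    have "D (sv_bracket (Lb 0) (Gb r)) = sv_bracket (D (Lb 0)) (Gb r) + sv_bracket (Lb 0) (D (Gb r))"
      by (rule leib) (auto simp: even_Lb odd_Gb)
    then have "Poly_Mapping.lookup (snd (D (sv_bracket (Lb 0) (Gb r)))) k =
       Poly_Mapping.lookup (snd (sv_bracket (D (Lb 0)) (Gb r))) k + Poly_Mapping.lookup (snd (sv_bracket (Lb 0) (D (Gb r)))) k"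
      by (simp add: lookup_add)
    then show ?thesis
      by (simp add: B2 lin snd_scale L2 L4 g_def h1_def algebra_simps)
  qed
  have Ea: "\<alpha> (r + s) = \<beta> r + \<beta> s" for r s
  proof -
    have "D (sv_bracket (Gb r) (Gb s)) = sv_bracket (D (Gb r)) (Gb s) + sv_bracket (Gb r) (D (Gb s))"
      by (rule leib) (auto simp: odd_Gb)
    then have "Poly_Mapping.lookup (fst (D (sv_bracket (Gb r) (Gb s)))) (r + s) =
       Poly_Mapping.lookup (fst (sv_bracket (D (Gb r)) (Gb s))) (r + s) + Poly_Mapping.lookup (fst (sv_bracket (Gb r) (D (Gb s)))) (r + s)"
      by (simp add: lookup_add)
    then have "2 * \<alpha> (r + s) = 2 * (\<beta> r + \<beta> s)"
      by (simp add: B1 lin fst_scale L1 L5 g_def \<alpha>_def \<beta>_def distrib_left)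
    then show ?thesis by (subst (asm) mult_left_cancel) auto
  qed
  have Eb: "\<alpha> 0 = \<alpha> 1 + \<alpha> (-1)"
  proof -
    have "D (sv_bracket (Lb 1) (Lb (-1))) = sv_bracket (D (Lb 1)) (Lb (-1)) + sv_bracket (Lb 1) (D (Lb (-1)))"
      by (rule leib) (auto simp: even_Lb)
    then have "Poly_Mapping.lookup (fst (D (sv_bracket (Lb 1) (Lb (-1))))) 0 =
       Poly_Mapping.lookup (fst (sv_bracket (D (Lb 1)) (Lb (-1)))) 0 + Poly_Mapping.lookup (fst (sv_bracket (Lb 1) (D (Lb (-1))))) 0"
      by (simp add: lookup_add)
    then have "2 * \<alpha> 0 = 2 * (\<alpha> 1 + \<alpha> (-1))"
      by (simp add: B3 lin fst_scale L3 L7 \<alpha>_def distrib_left mult.commute)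
    then show ?thesis by (subst (asm) mult_left_cancel) auto
  qed
  have b0: "\<beta> 0 = 0"
    using Eb Ea[of 0 0] Ea[of 1 0] Ea[of "-1" 0] Ea[of 1 "-1"] by simp
  have brec: "\<beta> r = \<beta> (r - 1) + \<beta> 1" for r
    using Ea[of r 0] Ea[of "r - 1" 1] b0 by simp
  have blin: "\<beta> r = of_int r * \<beta> 1" for r
  proof (induct r rule: int_induct_both)
    case (1 n) then show ?case
    proof (induct n)
      case 0 then show ?case by (simp add: b0)
    next
      case (Suc n)
      have "\<beta> (int (Suc n)) = \<beta> (int n) + \<beta> 1" using brec[of "int (Suc n)"] by simp
      with Suc show ?case by (simp add: algebra_simps)
    qed
  next
    case (2 n) then show ?case
    proof (induct n)
      case 0 then show ?case by (simp add: b0)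
    next
      case (Suc n)
      have "\<beta> (- int n) = \<beta> (- int (Suc n)) + \<beta> 1" 
      proof -
        have e: "- int n - 1 = - int (Suc n)" by simp
        show ?thesis using brec[of "- int n"] unfolding e .
      qed
      then have "\<beta> (- int (Suc n)) = \<beta> (- int n) - \<beta> 1" by (simp add: eq_diff_eq)
      also have "\<dots> = of_int (- int n) * \<beta> 1 - \<beta> 1" using Suc by simp
      also have "\<dots> = of_int (- int (Suc n)) * \<beta> 1" by (simp add: algebra_simps)
      finally show ?case .
    qed
  qed
  define Y where "Y j = (if j = 0 then - \<beta> 1 else Poly_Mapping.lookup h1 j / of_int j)" for j
  have fin: "finite {j. Y j \<noteq> 0}"
    by (rule finite_subset[of _ "insert 0 (Poly_Mapping.keys h1)"]) (auto simp: Y_def in_keys_iff)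
  have "Poly_Mapping.lookup (snd (D (Gb r))) k = Y (k - r) * (of_int (k - r) / 2 - of_int r)" for r k
  proof (cases "k = r")
    case True
    have "Poly_Mapping.lookup (snd (D (Gb r))) k = \<beta> r" using True by (simp add: \<beta>_def g_def)
    also have "\<dots> = of_int r * \<beta> 1" by (rule blin)
    finally show ?thesis using True by (simp add: Y_def)
  next
    case False
    then have "of_int (k - r) \<noteq> (0::complex)" by simp
    with E1[of k r] False show ?thesis
      by (simp add: Y_def g_def field_simps)
  qed
  with fin par show ?thesis by blast
qed

lemma lin_solve: fixes g0 g1 gm d0 d1 d2 dm :: complex
  assumes "2*g0 = 0" "2*g0 = dm*(-3/2) + d1*(3/2)" "2*g1 = d1/2 - d0" "-(1/2)*d2 = 2*g1"
     "2*gm = -dm/2 + d0" "-(5/2)*d1 = 2*gm - 3*d2"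
  shows "d1 = d0"
proof -
  have "dm = d1" using assms(1,2) by (simp add: field_simps)
  have "-(1/2)*d2 = d1/2 - d0" using assms(3,4) by simp
  then have d2: "d2 = 2*d0 - d1" by (simp add: field_simps)
  have "-(5/2)*d1 = (-dm/2 + d0) - 3*d2" using assms(5,6) by simp
  then have "-(5/2)*d1 = (-d1/2 + d0) - 3*(2*d0 - d1)" using \<open>dm = d1\<close> d2 by simp
  then show ?thesis by (simp add: field_simps)
qed

lemma odd_der:
  assumes D: "sv_hom_derivation True D"
  shows "\<exists>Y. finite {j. Y j \<noteq> 0} \<and>
     (\<forall>r k. Poly_Mapping.lookup (fst (D (Gb r))) k = 2 * Y (k - r)) \<and>
     (\<forall>r. snd (D (Gb r)) = 0)"
proof -
  have lin: "\<And>c x. D (sv_scale c x) = sv_scale c (D x)"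
    using D unfolding sv_hom_derivation_def sv_linear_def by blast
  have leibE: "\<And>x y. sv_even x \<Longrightarrow> (sv_even y \<or> sv_odd y) \<Longrightarrow>
        D (sv_bracket x y) = sv_bracket (D x) y + sv_bracket x (D y)"
  proof -
    fix x y assume hx: "sv_even x" and hy: "sv_even y \<or> sv_odd y"
    have "D (sv_bracket x y) = sv_bracket (D x) y
       + sv_scale (if True \<and> sv_odd x then -1 else 1) (sv_bracket x (D y))"
      using D hx hy unfolding sv_hom_derivation_def by blast
    moreover have "\<not> sv_odd x \<or> x = (0, 0)" using hx by (cases x) (auto simp: sv_even_def sv_odd_def)
    moreover have "sv_scale (-1) (sv_bracket (0,0) z) = sv_bracket (0,0) z" for z
      by (simp add: sv_bracket_def sv_scale_def poly_mapping_eq_iff fun_eq_iff lookup_map_mult)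
    ultimately show "D (sv_bracket x y) = sv_bracket (D x) y + sv_bracket x (D y)"
      by (cases "sv_odd x") auto
  qed
  have leibO: "\<And>x y. sv_odd x \<Longrightarrow> (sv_even y \<or> sv_odd y) \<Longrightarrow>
        D (sv_bracket x y) = sv_bracket (D x) y + sv_scale (-1) (sv_bracket x (D y))"
  proof -
    fix x y assume hx: "sv_odd x" and hy: "sv_even y \<or> sv_odd y"
    have "D (sv_bracket x y) = sv_bracket (D x) y
       + sv_scale (if True \<and> sv_odd x then -1 else 1) (sv_bracket x (D y))"
      using D hx hy unfolding sv_hom_derivation_def by blast
    then show "D (sv_bracket x y) = sv_bracket (D x) y + sv_scale (-1) (sv_bracket x (D y))"
      using hx by simp
  qed
  have par: "\<And>r. snd (D (Gb r)) = 0"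
  proof -
    fix r
    have "sv_map_of_parity True D" using D unfolding sv_hom_derivation_def by blast
    then have "sv_hom_of_parity (\<not> True) (D (Gb r))" using odd_Gb unfolding sv_map_of_parity_def by blast
    then show "snd (D (Gb r)) = 0" by (simp add: sv_hom_of_parity_def sv_even_def)
  qed
  define h2 where "h2 = snd (D (Lb 0))"
  define g where "g r = fst (D (Gb r))" for r
  define \<delta> where "\<delta> r = Poly_Mapping.lookup (g r) r" for r
  define \<gamma> where "\<gamma> n = Poly_Mapping.lookup (snd (D (Lb n))) n" for n
  have E1: "of_int (k - r) * Poly_Mapping.lookup (g r) k = 2 * Poly_Mapping.lookup h2 (k - r)" for r k
  proof -
    have "D (sv_bracket (Lb 0) (Gb r)) = sv_bracket (D (Lb 0)) (Gb r) + sv_bracket (Lb 0) (D (Gb r))"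
      by (rule leibE) (auto simp: even_Lb odd_Gb)
    then have "Poly_Mapping.lookup (fst (D (sv_bracket (Lb 0) (Gb r)))) k =
       Poly_Mapping.lookup (fst (sv_bracket (D (Lb 0)) (Gb r))) k + Poly_Mapping.lookup (fst (sv_bracket (Lb 0) (D (Gb r)))) k"
      by (simp add: lookup_add)
    then show ?thesis
      by (simp add: B2 lin fst_scale L1 L3 g_def h2_def algebra_simps)
  qed
  have Ea: "2 * \<gamma> (r + s) = \<delta> r * (of_int r / 2 - of_int s) + \<delta> s * (of_int s / 2 - of_int r)" for r s
  proof -
    have "D (sv_bracket (Gb r) (Gb s)) = sv_bracket (D (Gb r)) (Gb s) + sv_scale (-1) (sv_bracket (Gb r) (D (Gb s)))"
      by (rule leibO) (auto simp: odd_Gb)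
    then have "Poly_Mapping.lookup (snd (D (sv_bracket (Gb r) (Gb s)))) (r + s) =
       Poly_Mapping.lookup (snd (sv_bracket (D (Gb r)) (Gb s))) (r + s) + Poly_Mapping.lookup (snd (sv_scale (-1) (sv_bracket (Gb r) (D (Gb s))))) (r + s)"
      by (simp add: lookup_add)
    then show ?thesis
      by (simp add: B1 lin fst_scale snd_scale L2 L6 g_def \<gamma>_def \<delta>_def)
  qed
  have Eb: "(of_int m / 2 - of_int r) * \<delta> (m + r) = 2 * \<gamma> m + \<delta> r * of_int (m - r)" for m r
  proof -
    have "D (sv_bracket (Lb m) (Gb r)) = sv_bracket (D (Lb m)) (Gb r) + sv_bracket (Lb m) (D (Gb r))"
      by (rule leibE) (auto simp: even_Lb odd_Gb)
    then have "Poly_Mapping.lookup (fst (D (sv_bracket (Lb m) (Gb r)))) (m + r) =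
       Poly_Mapping.lookup (fst (sv_bracket (D (Lb m)) (Gb r))) (m + r) + Poly_Mapping.lookup (fst (sv_bracket (Lb m) (D (Gb r)))) (m + r)"
      by (simp add: lookup_add)
    then show ?thesis
      by (simp add: B2 lin fst_scale L1 L3 g_def \<gamma>_def \<delta>_def)
  qed
  have d1: "\<delta> 1 = \<delta> 0"
    by (rule lin_solve[of "\<gamma> 0" "\<delta> (-1)" "\<delta> 1" "\<gamma> 1" "\<delta> 0" "\<delta> 2" "\<gamma> (-1)"])
       (insert Ea[of 0 0] Ea[of "-1" 1] Ea[of 1 0] Eb[of 1 1] Ea[of "-1" 0] Eb[of "-1" 2], simp_all)
  have g1: "2 * \<gamma> 1 = - \<delta> 0 / 2" using Ea[of 1 0] d1 by simp
  have drec: "(1/2 - of_int r) * \<delta> (r + 1) = - \<delta> 0 / 2 + \<delta> r * (1 - of_int r)" for r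
    using Eb[of 1 r] g1 by (simp add: add.commute)
  have dconst: "\<delta> r = \<delta> 0" for r
  proof (induct r rule: int_induct_both)
    case (1 n) then show ?case
    proof (induct n)
      case 0 then show ?case by simp
    next
      case (Suc n)
      have "(1/2 - of_int (int n)) * \<delta> (int n + 1) = (1/2 - of_int (int n)) * \<delta> 0"
        using drec[of "int n"] Suc by (simp add: algebra_simps)
      moreover have "(1/2 - of_int (int n)) \<noteq> (0::complex)"
      proof
        assume "(1/2 - of_int (int n)) = (0::complex)"
        then have "(1::complex) = 2 * of_nat n" by (simp add: field_simps)
        then have "(1::nat) = 2 * n" by (metis of_nat_1 of_nat_eq_iff of_nat_mult of_nat_numeral)
        then show False by presburger
      qed
      ultimately have "\<delta> (int n + 1) = \<delta> 0" by simp
      then show ?case by (simp add: add.commute)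
    qed
  next
    case (2 n) then show ?case
    proof (induct n)
      case 0 then show ?case by simp
    next
      case (Suc n)
      have e: "- int (Suc n) + 1 = - int n" by simp
      have "(1/2 - of_int (- int (Suc n))) * \<delta> (- int n) = - \<delta> 0 / 2 + \<delta> (- int (Suc n)) * (1 - of_int (- int (Suc n)))"
        using drec[of "- int (Suc n)"] unfolding e .
      then have "4 * ((of_nat n + 2) * \<delta> 0) = 4 * ((of_nat n + 2) * \<delta> (- int (Suc n)))"
        using Suc by (simp add: field_simps)
      then have "(of_nat n + 2) * \<delta> 0 = (of_nat n + 2) * \<delta> (- int (Suc n))"
        by (subst (asm) mult_left_cancel) simp_all
      moreover have "(of_nat n + 2) \<noteq> (0::complex)"
        by (metis add_2_eq_Suc' of_nat_Suc of_nat_eq_0_iff nat.distinct(1) of_nat_numeral of_nat_add)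
      ultimately show ?case by simp
    qed
  qed
  define Y where "Y j = (if j = 0 then \<delta> 0 / 2 else Poly_Mapping.lookup h2 j / of_int j)" for j
  have fin: "finite {j. Y j \<noteq> 0}"
    by (rule finite_subset[of _ "insert 0 (Poly_Mapping.keys h2)"]) (auto simp: Y_def in_keys_iff)
  have "Poly_Mapping.lookup (fst (D (Gb r))) k = 2 * Y (k - r)" for r k
  proof (cases "k = r")
    case True
    have "Poly_Mapping.lookup (fst (D (Gb r))) k = \<delta> r" using True by (simp add: \<delta>_def g_def)
    also have "\<dots> = \<delta> 0" by (rule dconst)
    finally show ?thesis using True by (simp add: Y_def)
  next
    case False
    then have "of_int (k - r) \<noteq> (0::complex)" by simp
    with E1[of k r] False show ?thesis
      by (simp add: Y_def g_def field_simps)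
  qed
  with fin par show ?thesis by blast
qed


lemma VAN:
  fixes f :: "int \<Rightarrow> complex"
  assumes fin: "finite {k. f k \<noteq> 0}"
    and z: "\<And>\<zeta>. \<zeta> \<noteq> 0 \<Longrightarrow> Sum_any (\<lambda>k. f k * \<zeta> powi k) = 0"
  shows "f k = 0"
proof (rule ccontr)
  assume fk: "f k \<noteq> 0"
  define S where "S = {k. f k \<noteq> 0}"
  have finS: "finite S" using fin by (simp add: S_def)
  define N where "N = (\<Sum>j\<in>S. nat \<bar>j\<bar>)"
  have bnd: "nat \<bar>j\<bar> \<le> N" if "j \<in> S" for j
    unfolding N_def by (rule member_le_sum[OF that]) (use finS in auto)
  have bnd': "0 \<le> j + int N" if "j \<in> S" for j using bnd[OF that] by linarith
  define q where "q = (\<Sum>j\<in>S. monom (f j) (nat (j + int N)))"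
  have pq: "poly q \<zeta> = 0" if "\<zeta> \<noteq> 0" for \<zeta>
  proof -
    have "poly q \<zeta> = (\<Sum>j\<in>S. f j * \<zeta> ^ nat (j + int N))"
      by (simp add: q_def poly_sum poly_monom)
    also have "\<dots> = (\<Sum>j\<in>S. \<zeta> ^ N * (f j * \<zeta> powi j))"
    proof (rule sum.cong[OF refl])
      fix j assume "j \<in> S"
      then have "\<zeta> ^ nat (j + int N) = \<zeta> powi (j + int N)" using bnd' by (simp add: power_int_def)
      also have "\<dots> = \<zeta> powi j * \<zeta> ^ N" using that by (simp add: power_int_add)
      finally show "f j * \<zeta> ^ nat (j + int N) = \<zeta> ^ N * (f j * \<zeta> powi j)" by simp
    qed
    also have "\<dots> = \<zeta> ^ N * (\<Sum>j\<in>S. f j * \<zeta> powi j)" by (simp add: sum_distrib_left)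
    also have "(\<Sum>j\<in>S. f j * \<zeta> powi j) = Sum_any (\<lambda>j. f j * \<zeta> powi j)"
      by (rule Sum_any.expand_superset[symmetric]) (use fin in \<open>auto simp: S_def\<close>)
    finally show ?thesis using z[OF that] by simp
  qed
  have "q = 0"
  proof (rule ccontr)
    assume "q \<noteq> 0"
    then have "finite {x. poly q x = 0}" by (rule poly_roots_finite)
    moreover have "UNIV - {0} \<subseteq> {x. poly q x = 0}" using pq by auto
    moreover have "infinite (UNIV - {0::complex})" by (simp add: infinite_UNIV_char_0)
    ultimately show False using finite_subset by blast
  qed
  have kS: "k \<in> S" using fk by (simp add: S_def)
  have "coeff q (nat (k + int N)) = (\<Sum>j\<in>S. if nat (j + int N) = nat (k + int N) then f j else 0)"
    by (simp add: q_def coeff_sum coeff_monom)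
  also have "\<dots> = (\<Sum>j\<in>S. if j = k then f j else 0)"
  proof (rule sum.cong[OF refl])
    fix j assume "j \<in> S"
    then have "0 \<le> j + int N" "0 \<le> k + int N" using bnd' kS by auto
    then have "(nat (j + int N) = nat (k + int N)) = (j = k)" by (simp add: nat_eq_iff)
    then show "(if nat (j + int N) = nat (k + int N) then f j else 0) = (if j = k then f j else 0)" by simp
  qed
  also have "\<dots> = f k" using kS finS by simp
  finally show False using \<open>q = 0\<close> fk by simp
qed

lemma ident:
  fixes n M Z T :: complex
  defines "Q \<equiv> \<lambda>k. T^2 * (k^2 - 3*k + 2) + T*M*Z*(2*k^2 - 3*(1+M)*k + 6*M - M^2 - 1)
                    + M^2*Z^2*(k^2 - 3*M*k + 2*M^2)"
  shows "Z*(n/2 - M)*Q (n+M) + (-Z - T)*(n/2)*Q n + T*(n/2 - 1)*Q (n+1) = 0"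
proof -
  have "2 * (Z*(n/2 - M)*Q (n+M) + (-Z - T)*(n/2)*Q n + T*(n/2 - 1)*Q (n+1))
    = Z*(n - 2*M)*Q (n+M) + (-Z - T)*n*Q n + T*(n - 2)*Q (n+1)"
    by (simp add: field_simps)
  also have "\<dots> = 0" unfolding Q_def by (simp add: algebra_simps power2_eq_square)
  finally show ?thesis by (simp only: mult_eq_0_iff) simp
qed

lemma fin_shift:
  fixes A g :: "int \<Rightarrow> complex"
  assumes "finite {n. A n \<noteq> 0}"
  shows "finite {k. A (k - d) * g k \<noteq> 0}"
proof (rule finite_subset)
  show "{k. A (k - d) * g k \<noteq> 0} \<subseteq> (\<lambda>n. n + d) ` {n. A n \<noteq> 0}"
    by (auto intro!: image_eqI[where x="_ - d"])
  show "finite ((\<lambda>n. n + d) ` {n. A n \<noteq> 0})" using assms by simp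
qed

lemma shift: fixes d :: int shows "Sum_any (\<lambda>k. A (k - d) * g k) = Sum_any (\<lambda>n. (A n :: complex) * g (n + d))"
proof (rule Sum_any.reindex_cong[where l="\<lambda>n. n + d"])
  show "bij (\<lambda>n::int. n + d)"
  proof (rule bijI)
    show "inj (\<lambda>n::int. n + d)" by (simp add: inj_def)
    show "surj (\<lambda>n::int. n + d)" unfolding surj_def by (metis diff_add_cancel)
  qed
  show "(\<lambda>k. A (k - d) * g k) \<circ> (\<lambda>n. n + d) = (\<lambda>n. A n * g (n + d))"
    by (simp add: fun_eq_iff)
qed

lemma combine:
  fixes A a b c :: "int \<Rightarrow> complex"
  assumes fin: "finite {n. A n \<noteq> 0}"
  shows "Sum_any (\<lambda>k. A (k - M) * a k + (s * (A k * b k) + t * (A (k - 1) * c k)))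
       = Sum_any (\<lambda>n. A n * (a (n + M) + s * b n + t * c (n + 1)))"
proof -
  have f1: "finite {k. A (k - M) * a k \<noteq> 0}" by (rule fin_shift[OF fin])
  have f2: "finite {k. s * (A k * b k) \<noteq> 0}"
    by (rule finite_subset[OF _ fin]) auto
  have f3': "finite {k. A (k - 1) * c k \<noteq> 0}" by (rule fin_shift[OF fin])
  have f3: "finite {k. t * (A (k - 1) * c k) \<noteq> 0}"
    by (rule finite_subset[OF _ f3']) auto
  have f23: "finite {k. s * (A k * b k) + t * (A (k - 1) * c k) \<noteq> 0}"
    by (rule finite_subset[OF _ finite_UnI[OF f2 f3]]) auto
  have "Sum_any (\<lambda>k. A (k - M) * a k + (s * (A k * b k) + t * (A (k - 1) * c k)))
      = Sum_any (\<lambda>k. A (k - M) * a k) + (Sum_any (\<lambda>k. s * (A k * b k)) + Sum_any (\<lambda>k. t * (A (k - 1) * c k)))"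
    using Sum_any.distrib[OF f1 f23] Sum_any.distrib[OF f2 f3] by simp
  also have "Sum_any (\<lambda>k. A (k - M) * a k) = Sum_any (\<lambda>n. A n * a (n + M))" by (rule shift)
  also have "Sum_any (\<lambda>k. t * (A (k - 1) * c k)) = t * Sum_any (\<lambda>k. A (k - 1) * c k)"
    by (rule Sum_any_right_distrib[OF f3', symmetric])
  also have "Sum_any (\<lambda>k. A (k - 1) * c k) = Sum_any (\<lambda>n. A n * c (n + 1))" by (rule shift)
  also have "t * Sum_any (\<lambda>n. A n * c (n + 1)) = Sum_any (\<lambda>n. t * (A n * c (n + 1)))"
    by (rule Sum_any_right_distrib) (rule finite_subset[OF _ fin], auto)
  finally have eq: "Sum_any (\<lambda>k. A (k - M) * a k + (s * (A k * b k) + t * (A (k - 1) * c k)))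
     = Sum_any (\<lambda>n. A n * a (n + M)) + (Sum_any (\<lambda>k. s * (A k * b k)) + Sum_any (\<lambda>n. t * (A n * c (n + 1))))" .
  have g1: "finite {n. A n * a (n + M) \<noteq> 0}" by (rule finite_subset[OF _ fin]) auto
  have g3: "finite {n. t * (A n * c (n + 1)) \<noteq> 0}" by (rule finite_subset[OF _ fin]) auto
  have g23: "finite {n. s * (A n * b n) + t * (A n * c (n + 1)) \<noteq> 0}"
    by (rule finite_subset[OF _ fin]) auto
  have "Sum_any (\<lambda>n. A n * (a (n + M) + s * b n + t * c (n + 1)))
      = Sum_any (\<lambda>n. A n * a (n + M) + (s * (A n * b n) + t * (A n * c (n + 1))))"
    by (simp add: algebra_simps)
  also have "\<dots> = Sum_any (\<lambda>n. A n * a (n + M)) + (Sum_any (\<lambda>k. s * (A k * b k)) + Sum_any (\<lambda>n. t * (A n * c (n + 1))))"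
    using Sum_any.distrib[OF g1 g23] Sum_any.distrib[OF f2 g3] by simp
  finally show ?thesis using eq by simp
qed

lemma scale_zero[simp]: "sv_scale c 0 = 0"
  by (rule prod_eqI; rule poly_mapping_eqI) (simp_all add: fst_scale snd_scale)

lemma main_rep:
  assumes loc: "sv_local_derivation \<Delta>"
    and h0: "\<Delta> (Gb 0) = 0" and h1: "\<Delta> (Gb 1) = 0"
  shows "\<exists>Y1 Y2. finite {j. Y1 j \<noteq> 0} \<and> finite {j. Y2 j \<noteq> 0} \<and>
    (\<forall>k. Poly_Mapping.lookup (snd (\<Delta> (Gb M))) k =
        Y1 (k - M) * (of_int (k - M) / 2 - of_int M) + (s * (Y1 k * (of_int (k - 0) / 2 - of_int 0))
          + t * (Y1 (k - 1) * (of_int (k - 1) / 2 - of_int 1)))) \<and>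
    (\<forall>k. Poly_Mapping.lookup (fst (\<Delta> (Gb M))) k =
        Y2 (k - M) * 2 + (s * (Y2 k * 2) + t * (Y2 (k - 1) * 2)))"
proof -
  define x where "x = Gb M + (sv_scale s (Gb 0) + sv_scale t (Gb 1))"
  have linD: "sv_linear \<Delta>" using loc by (simp add: sv_local_derivation_def)
  have "\<Delta> x = \<Delta> (Gb M) + (sv_scale s (\<Delta> (Gb 0)) + sv_scale t (\<Delta> (Gb 1)))"
  proof -
    have a: "\<And>a b. \<Delta> (a + b) = \<Delta> a + \<Delta> b" and c: "\<And>c a. \<Delta> (sv_scale c a) = sv_scale c (\<Delta> a)"
      using linD unfolding sv_linear_def by blast+
    show ?thesis unfolding x_def by (simp only: a c)
  qed
  then have dx: "\<Delta> x = \<Delta> (Gb M)" using h0 h1 by simp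
  obtain D where D: "sv_derivation D" and eqD: "\<Delta> x = D x"
    using loc unfolding sv_local_derivation_def by blast
  obtain D0 D1 where D0: "sv_hom_derivation False D0" and D1: "sv_hom_derivation True D1"
    and DD: "\<And>y. D y = D0 y + D1 y"
    using D unfolding sv_derivation_def by blast
  obtain Y1 where Y1: "finite {j. Y1 j \<noteq> 0}"
    and Y1s: "\<And>r k. Poly_Mapping.lookup (snd (D0 (Gb r))) k = Y1 (k - r) * (of_int (k - r) / 2 - of_int r)"
    and Y1f: "\<And>r. fst (D0 (Gb r)) = 0"
    using even_der[OF D0] by blast
  obtain Y2 where Y2: "finite {j. Y2 j \<noteq> 0}"
    and Y2f: "\<And>r k. Poly_Mapping.lookup (fst (D1 (Gb r))) k = 2 * Y2 (k - r)"
    and Y2s: "\<And>r. snd (D1 (Gb r)) = 0"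
    using odd_der[OF D1] by blast
  have l0: "D0 x = D0 (Gb M) + (sv_scale s (D0 (Gb 0)) + sv_scale t (D0 (Gb 1)))"
  proof -
    have a: "\<And>a b. D0 (a + b) = D0 a + D0 b" and c: "\<And>c a. D0 (sv_scale c a) = sv_scale c (D0 a)"
      using D0 unfolding sv_hom_derivation_def sv_linear_def by blast+
    show ?thesis unfolding x_def by (simp only: a c)
  qed
  have l1: "D1 x = D1 (Gb M) + (sv_scale s (D1 (Gb 0)) + sv_scale t (D1 (Gb 1)))"
  proof -
    have a: "\<And>a b. D1 (a + b) = D1 a + D1 b" and c: "\<And>c a. D1 (sv_scale c a) = sv_scale c (D1 a)"
      using D1 unfolding sv_hom_derivation_def sv_linear_def by blast+
    show ?thesis unfolding x_def by (simp only: a c)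
  qed
  have "\<Delta> (Gb M) = D0 x + D1 x" using dx eqD DD by simp
  then have "Poly_Mapping.lookup (snd (\<Delta> (Gb M))) k =
        Y1 (k - M) * (of_int (k - M) / 2 - of_int M) + (s * (Y1 k * (of_int (k - 0) / 2 - of_int 0))
          + t * (Y1 (k - 1) * (of_int (k - 1) / 2 - of_int 1)))" for k
    by (simp only: l0 l1 snd_add lookup_add snd_scale Y1s Y2s) simp
  moreover have "Poly_Mapping.lookup (fst (\<Delta> (Gb M))) k =
        Y2 (k - M) * 2 + (s * (Y2 k * 2) + t * (Y2 (k - 1) * 2))" for k
    using \<open>\<Delta> (Gb M) = D0 x + D1 x\<close>
    by (simp only: l0 l1 fst_add lookup_add fst_scale Y1f Y2f) (simp add: algebra_simps)
  ultimately show ?thesis using Y1 Y2 by blast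
qed

definition Qf :: "complex \<Rightarrow> complex \<Rightarrow> complex \<Rightarrow> complex \<Rightarrow> complex" where
  "Qf M Z T x = T^2 * (x^2 - 3*x + 2) + T*(M*Z)*(2*x^2 - 3*(1+M)*x + 6*M - M^2 - 1)
                    + (M^2*Z^2)*(x^2 - 3*M*x + 2*M^2)"

lemma ident2:
  fixes n M Z T :: complex
  shows "Z*(n/2 - M)*Qf M Z T (n+M) + (-Z - T)*(n/2)*Qf M Z T n + T*(n/2 - 1)*Qf M Z T (n+1) = 0"
proof -
  have "2 * (Z*(n/2 - M)*Qf M Z T (n+M) + (-Z - T)*(n/2)*Qf M Z T n + T*(n/2 - 1)*Qf M Z T (n+1))
    = Z*(n - 2*M)*Qf M Z T (n+M) + (-Z - T)*n*Qf M Z T n + T*(n - 2)*Qf M Z T (n+1)"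
    by (simp add: field_simps)
  also have "\<dots> = 0" unfolding Qf_def by (simp add: algebra_simps power2_eq_square)
  finally show ?thesis by (simp only: mult_eq_0_iff) simp
qed

lemma phi_zero:
  assumes loc: "sv_local_derivation \<Delta>"
    and h0: "\<Delta> (Gb 0) = 0" and h1: "\<Delta> (Gb 1) = 0" and z: "\<zeta> \<noteq> 0"
  shows "Sum_any (\<lambda>k. Poly_Mapping.lookup (snd (\<Delta> (Gb M))) k *
            (\<zeta> powi k * Qf (of_int M) (\<zeta> powi M) T (of_int k))) = 0"
proof -
  define Z where "Z = \<zeta> powi M"
  define s where "s = - Z - T"
  define t where "t = T / \<zeta>"
  obtain Y1 Y2 where Y1: "finite {j. Y1 j \<noteq> 0}" and
    V: "\<And>k. Poly_Mapping.lookup (snd (\<Delta> (Gb M))) k =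
        Y1 (k - M) * (of_int (k - M) / 2 - of_int M) + (s * (Y1 k * (of_int (k - 0) / 2 - of_int 0))
          + t * (Y1 (k - 1) * (of_int (k - 1) / 2 - of_int 1)))"
    using main_rep[OF loc h0 h1, of M s t] by blast
  define e where "e k = \<zeta> powi k * Qf (of_int M) Z T (of_int k)" for k
  define a where "a k = (of_int (k - M) / 2 - of_int M) * e k" for k
  define b where "b k = (of_int (k - 0) / 2 - of_int 0) * e k" for k
  define c where "c k = (of_int (k - 1) / 2 - of_int 1) * e k" for k
  have "Sum_any (\<lambda>k. Poly_Mapping.lookup (snd (\<Delta> (Gb M))) k *
            (\<zeta> powi k * Qf (of_int M) (\<zeta> powi M) T (of_int k)))
      = Sum_any (\<lambda>k. Y1 (k - M) * a k + (s * (Y1 k * b k) + t * (Y1 (k - 1) * c k)))"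
    by (rule Sum_any.cong) (simp add: V a_def b_def c_def e_def Z_def algebra_simps)
  also have "\<dots> = Sum_any (\<lambda>n. Y1 n * (a (n + M) + s * b n + t * c (n + 1)))"
    by (rule combine[OF Y1])
  also have "\<dots> = 0"
  proof -
    have "Y1 n * (a (n + M) + s * b n + t * c (n + 1)) = 0" for n
    proof -
    have pz1: "\<zeta> powi (n + M) = \<zeta> powi n * Z" using z by (simp add: power_int_add Z_def)
    have pz2: "\<zeta> powi (n + 1) = \<zeta> powi n * \<zeta>" using z by (simp add: power_int_add)
    have tz: "t * \<zeta> = T" using z by (simp add: t_def)
    have "a (n + M) + s * b n + t * c (n + 1) =
      \<zeta> powi n * (Z*(of_int n/2 - of_int M)*Qf (of_int M) Z T (of_int n + of_int M)
        + (-Z - T)*(of_int n/2)*Qf (of_int M) Z T (of_int n)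
        + (t * \<zeta>)*(of_int n/2 - 1)*Qf (of_int M) Z T (of_int n + 1))"
      unfolding a_def b_def c_def e_def pz1 pz2 s_def by (simp add: algebra_simps)
    also have "\<dots> = 0" unfolding tz ident2 by simp
    finally show "Y1 n * (a (n + M) + s * b n + t * c (n + 1)) = 0" by simp
  qed
  then show ?thesis by (simp del: mult_eq_0_iff)
  qed
  finally show ?thesis .
qed

lemma L_zero:
  assumes loc: "sv_local_derivation \<Delta>"
    and h0: "\<Delta> (Gb 0) = 0" and h1: "\<Delta> (Gb 1) = 0" and z: "\<zeta> \<noteq> 0"
  shows "Sum_any (\<lambda>k. Poly_Mapping.lookup (fst (\<Delta> (Gb M))) k * \<zeta> powi k) = 0"
proof -
  define s where "s = - (\<zeta> powi M)"
  define t :: complex where "t = 0"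
  obtain Y2 where Y2: "finite {j. Y2 j \<noteq> 0}" and
    W: "\<And>k. Poly_Mapping.lookup (fst (\<Delta> (Gb M))) k =
        Y2 (k - M) * 2 + (s * (Y2 k * 2) + t * (Y2 (k - 1) * 2))"
    using main_rep[OF loc h0 h1, of M s t] by blast
  have "Sum_any (\<lambda>k. Poly_Mapping.lookup (fst (\<Delta> (Gb M))) k * \<zeta> powi k)
      = Sum_any (\<lambda>k. Y2 (k - M) * (2 * \<zeta> powi k) + (s * (Y2 k * (2 * \<zeta> powi k)) + t * (Y2 (k - 1) * (2 * \<zeta> powi k))))"
    by (rule Sum_any.cong) (simp add: W algebra_simps)
  also have "\<dots> = Sum_any (\<lambda>n. Y2 n * (2 * \<zeta> powi (n + M) + s * (2 * \<zeta> powi n) + t * (2 * \<zeta> powi (n + 1))))"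
    by (rule combine[OF Y2])
  also have "\<dots> = 0"
  proof -
    have "Y2 n * (2 * \<zeta> powi (n + M) + s * (2 * \<zeta> powi n) + t * (2 * \<zeta> powi (n + 1))) = 0" for n
      using z by (simp add: power_int_add s_def t_def)
    then show ?thesis by (simp del: mult_eq_0_iff)
  qed
  finally show ?thesis .
qed

lemma split3:
  fixes V qa qb qc :: "int \<Rightarrow> complex" and A B C z :: complex
  assumes fin: "finite {k. V k \<noteq> 0}"
  shows "Sum_any (\<lambda>k. V k * (z powi k * (A * qa k + B * qb k + C * qc k)))
     = A * Sum_any (\<lambda>k. V k * qa k * z powi k) + B * Sum_any (\<lambda>k. V k * qb k * z powi k)
       + C * Sum_any (\<lambda>k. V k * qc k * z powi k)"
proof -
  have f: "finite {k. D * (V k * q k * z powi k) \<noteq> 0}" for D q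
    by (rule finite_subset[OF _ fin]) auto
  have f': "finite {k. V k * q k * z powi k \<noteq> 0}" for q
    by (rule finite_subset[OF _ fin]) auto
  have f2: "finite {k. B * (V k * qb k * z powi k) + C * (V k * qc k * z powi k) \<noteq> 0}"
    by (rule finite_subset[OF _ fin]) auto
  have "Sum_any (\<lambda>k. V k * (z powi k * (A * qa k + B * qb k + C * qc k)))
      = Sum_any (\<lambda>k. A * (V k * qa k * z powi k) + (B * (V k * qb k * z powi k) + C * (V k * qc k * z powi k)))"
    by (rule Sum_any.cong) (simp add: algebra_simps)
  also have "\<dots> = Sum_any (\<lambda>k. A * (V k * qa k * z powi k)) + (Sum_any (\<lambda>k. B * (V k * qb k * z powi k)) + Sum_any (\<lambda>k. C * (V k * qc k * z powi k)))"
    using Sum_any.distrib[OF f f2] Sum_any.distrib[OF f f] by simp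
  also have "\<dots> = A * Sum_any (\<lambda>k. V k * qa k * z powi k) + (B * Sum_any (\<lambda>k. V k * qb k * z powi k)
       + C * Sum_any (\<lambda>k. V k * qc k * z powi k))"
    using Sum_any_right_distrib[OF f'] by simp
  finally show ?thesis by (simp add: add.assoc)
qed

lemma int_fact:
  fixes k M :: int
  assumes "M \<noteq> 0" "M \<noteq> 1"
    and a: "k^2 - 3*k + 2 = 0" and b: "2*k^2 - 3*(1+M)*k + 6*M - M^2 - 1 = 0"
    and c: "k^2 - 3*M*k + 2*M^2 = 0"
  shows False
proof -
  have "(k - 1) * (k - 2) = 0" using a by (simp add: algebra_simps power2_eq_square)
  then have "k = 1 \<or> k = 2" by simp
  then show False
  proof
    assume k: "k = 1"
    have "(M - 1) * (M - 2) = 0" using b k by (simp add: algebra_simps power2_eq_square)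
    moreover have "(2*M - 1) * (M - 1) = 0" using c k by (simp add: algebra_simps power2_eq_square)
    ultimately show False using assms(2) by auto
  next
    assume k: "k = 2"
    have "(1 - M) * (1 + M) = 0" using b k by (simp add: algebra_simps power2_eq_square)
    moreover have "(M - 1) * (M - 2) = 0" using c k by (simp add: algebra_simps power2_eq_square)
    ultimately show False using assms(2) by auto
  qed
qed

theorem lemma3p6:
  assumes "sv_local_derivation \<Delta>"
    and "\<Delta> (Gb 0) = 0" and "\<Delta> (Gb 1) = 0"
  shows "\<forall>m::int. \<Delta> (Gb m) = 0"
proof
  fix M :: int
  note loc = assms(1) and h0 = assms(2) and h1 = assms(3)
  show "\<Delta> (Gb M) = 0"
  proof (cases "M = 0 \<or> M = 1")
    case True then show ?thesis using h0 h1 by auto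
  next
    case False
    then have M0: "M \<noteq> 0" and M1: "M \<noteq> 1" by auto
    define V where "V k = Poly_Mapping.lookup (snd (\<Delta> (Gb M))) k" for k
    define W where "W k = Poly_Mapping.lookup (fst (\<Delta> (Gb M))) k" for k
    have finV: "finite {k. V k \<noteq> 0}" by (simp add: V_def)
    have finW: "finite {k. W k \<noteq> 0}" by (simp add: W_def)
    define qa where "qa k = k^2 - 3*k + 2" for k :: int
    define qb where "qb k = 2*k^2 - 3*(1+M)*k + 6*M - M^2 - 1" for k :: int
    define qc where "qc k = k^2 - 3*M*k + 2*M^2" for k :: int
    have Qsplit: "Qf (of_int M) Z T (of_int k) = T^2 * of_int (qa k) + T * (of_int M * Z) * of_int (qb k)
        + (of_int M ^ 2 * Z ^ 2) * of_int (qc k)" for Z T k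
      by (simp add: Qf_def qa_def qb_def qc_def)
    define F where "F q \<zeta> = Sum_any (\<lambda>k. V k * of_int (q k) * \<zeta> powi k)" for q and \<zeta> :: complex
    have PhiT: "T^2 * F qa \<zeta> + T * (of_int M * \<zeta> powi M) * F qb \<zeta> + (of_int M ^ 2 * (\<zeta> powi M) ^ 2) * F qc \<zeta> = 0"
      if z: "\<zeta> \<noteq> 0" for \<zeta> T
    proof -
      have "Sum_any (\<lambda>k. V k * (\<zeta> powi k * Qf (of_int M) (\<zeta> powi M) T (of_int k))) = 0"
        using phi_zero[OF loc h0 h1 z, of M T] by (simp add: V_def)
      then show ?thesis
        unfolding Qsplit F_def by (subst (asm) split3[OF finV]) simp
    qed
    have Fz: "F qa \<zeta> = 0 \<and> F qb \<zeta> = 0 \<and> F qc \<zeta> = 0" if z: "\<zeta> \<noteq> 0" for \<zeta>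
    proof -
      have Z: "\<zeta> powi M \<noteq> 0" using z by simp
      have MZ: "of_int M * \<zeta> powi M \<noteq> 0" using Z M0 by simp
      from PhiT[OF z, of 0] have "F qc \<zeta> = 0" using Z M0 by simp
      moreover from PhiT[OF z, of 1] have e1: "F qa \<zeta> + (of_int M * \<zeta> powi M) * F qb \<zeta> = 0"
        using \<open>F qc \<zeta> = 0\<close> by simp
      moreover from PhiT[OF z, of "-1"] have e2: "F qa \<zeta> - (of_int M * \<zeta> powi M) * F qb \<zeta> = 0"
        using \<open>F qc \<zeta> = 0\<close> by simp
      ultimately have "(of_int M * \<zeta> powi M) * F qb \<zeta> = 0" "F qa \<zeta> = 0"
        by (simp_all add: algebra_simps)
      then show ?thesis using MZ z \<open>F qc \<zeta> = 0\<close> by simp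
    qed
    have van: "V k * of_int (q k) = 0" if "\<And>\<zeta>. \<zeta> \<noteq> 0 \<Longrightarrow> F q \<zeta> = 0" for q k
    proof (rule VAN[where f="\<lambda>k. V k * of_int (q k)"])
      show "finite {k. V k * of_int (q k) \<noteq> 0}" by (rule finite_subset[OF _ finV]) auto
      show "Sum_any (\<lambda>k. V k * of_int (q k) * \<zeta> powi k) = 0" if "\<zeta> \<noteq> 0" for \<zeta>
        using \<open>\<And>\<zeta>. \<zeta> \<noteq> 0 \<Longrightarrow> F q \<zeta> = 0\<close>[OF that] by (simp add: F_def)
    qed
    have V0: "V k = 0" for k
    proof (rule ccontr)
      assume "V k \<noteq> 0"
      moreover have "V k * of_int (qa k) = 0" "V k * of_int (qb k) = 0" "V k * of_int (qc k) = 0"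
        using van Fz by blast+
      ultimately have "qa k = 0" "qb k = 0" "qc k = 0" by simp_all
      then show False using int_fact[OF M0 M1, of k] by (simp add: qa_def qb_def qc_def)
    qed
    have W0: "W k = 0" for k
      by (rule VAN[OF finW]) (use L_zero[OF loc h0 h1] in \<open>simp add: W_def\<close>)
    show ?thesis
      by (rule prod_eqI; rule poly_mapping_eqI) (use V0 W0 in \<open>simp_all add: V_def W_def\<close>)
  qed
qed


end
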